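(* Let $(A,B)$ be an $n\times n$ definite pencil and suppose $U\in\mathbb{C}^{n\times k}$ has orthonormal columns spanning a right deflating subspace of $(A,B)$. For any $\epsilon>0$ and any $0<\epsilon'\le\epsilon\left(1+\frac{\|(A,B)\|_2}{\gamma(A,B)}\right)^{-1}$ we have $$\Lambda^{\mathrm{sym}}_{\epsilon'}(U^HAU,U^HBU)\subseteq\Lambda^{\mathrm{sym}}_\epsilon(A,B).$$
   Context: A pencil $(A,B)$ of $n\times n$ complex matrices is definite if $A,B$ are Hermitian and $\gamma(A,B)=\min_{\|x\|_2=1}|x^H(A+iB)x|>0$. A $k$-dimensional subspace $\mathcal X\subseteq\mathbb{C}^n$ is a right deflating subspace of $(A,B)$ if $\dim(A\mathcal X+B\mathcal X)\le k$ (for a definite pencil, equivalently, $\mathcal X$ is spanned by $k$ columns of a nonsingular $X$ with $X^HAX$ and $X^HBX$ diagonal). $\|(A,B)\|_2$ is the spectral norm of the $n\times2n$ matrix $[A,\ B]$. For Hermitian $A,B$ (of any size) and $\delta>0$, $\Lambda^{\mathrm{sym}}_\delta(A,B)=\{z\in\mathbb{C}:(A+E)u=z(B+F)u$ for some $u\ne0$ and Hermitian $E,F$ with $\sqrt{\|E\|_2^2+\|F\|_2^2}\le\delta\}$. *)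

theory Defs
  imports "HOL-Analysis.Analysis"
begin

definition cadj :: "complex^'n^'m \<Rightarrow> complex^'m^'n" where
  "cadj M = (\<chi> i j. cnj (M $ j $ i))"

definition hermitian :: "complex^'n^'n \<Rightarrow> bool" where
  "hermitian M \<longleftrightarrow> cadj M = M"

definition qform :: "complex^'n^'n \<Rightarrow> complex^'n \<Rightarrow> complex" where
  "qform M x = (\<Sum>i\<in>UNIV. cnj (x $ i) * (M *v x) $ i)"

text \<open>Spectral norm (operator 2-norm; the norm on complex^'n is the Euclidean norm).\<close>
definition specnorm :: "complex^'n^'m \<Rightarrow> real" where
  "specnorm M = onorm (\<lambda>x. M *v x)"

text \<open>Spectral norm of the n x 2n matrix [A, B]; the product norm is sqrt(|x|^2+|y|^2).\<close>
definition pencil_norm :: "complex^'n^'m \<Rightarrow> complex^'n^'m \<Rightarrow> real" where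
  "pencil_norm A B = onorm (\<lambda>(x, y). A *v x + B *v y)"

definition crawford :: "complex^'n^'n \<Rightarrow> complex^'n^'n \<Rightarrow> real" where
  "crawford A B = Inf {cmod (qform (A + (\<chi> i j. \<i> * B $ i $ j)) x) | x. norm x = 1}"

definition definite_pencil :: "complex^'n^'n \<Rightarrow> complex^'n^'n \<Rightarrow> bool" where
  "definite_pencil A B \<longleftrightarrow> hermitian A \<and> hermitian B \<and> crawford A B > 0"

definition right_deflating :: "complex^'n^'n \<Rightarrow> complex^'n^'n \<Rightarrow> (complex^'n) set \<Rightarrow> bool" where
  "right_deflating A B X \<longleftrightarrow> vec.subspace X \<and>
     vec.dim {A *v x + B *v y | x y. x \<in> X \<and> y \<in> X} \<le> vec.dim X"

definition sym_pseudospec :: "real \<Rightarrow> complex^'m^'m \<Rightarrow> complex^'m^'m \<Rightarrow> complex set" where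
  "sym_pseudospec \<delta> A B = {z. \<exists>u E F. u \<noteq> 0 \<and> hermitian E \<and> hermitian F \<and>
      sqrt ((specnorm E)\<^sup>2 + (specnorm F)\<^sup>2) \<le> \<delta> \<and>
      (A + E) *v u = z *s ((B + F) *v u)}"

end

theory Submission
  imports Defs
begin

definition cinner :: "complex^'n \<Rightarrow> complex^'n \<Rightarrow> complex" where
  "cinner x y = (\<Sum>i\<in>UNIV. cnj (x $ i) * y $ i)"

lemma cinner_adj: "cinner (M *v x) y = cinner x (cadj M *v y)"
proof -
  have "cinner (M *v x) y = (\<Sum>i\<in>UNIV. \<Sum>j\<in>UNIV. cnj (M$i$j) * cnj (x$j) * y$i)"
    unfolding cinner_def matrix_vector_mult_def by (simp add: sum_distrib_right)
  also have "\<dots> = (\<Sum>j\<in>UNIV. \<Sum>i\<in>UNIV. cnj (M$i$j) * cnj (x$j) * y$i)"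
    by (rule sum.swap)
  also have "\<dots> = cinner x (cadj M *v y)"
    unfolding cinner_def matrix_vector_mult_def cadj_def
    by (simp add: sum_distrib_left mult_ac)
  finally show ?thesis .
qed

lemma cinner_cnj: "cnj (cinner x y) = cinner y x"
  unfolding cinner_def by (simp add: mult.commute)

lemma cinner_re: "Re (cinner x y) = inner x y"
  unfolding cinner_def inner_vec_def inner_complex_def by (simp add: Re_sum)

lemma cinner_self: "cinner x x = of_real ((norm x)\<^sup>2)"
proof -
  have "Im (cinner x x) = 0" unfolding cinner_def by (simp add: Im_sum)
  moreover have "Re (cinner x x) = (norm x)\<^sup>2" by (simp add: cinner_re power2_norm_eq_inner)
  ultimately show ?thesis by (simp add: complex_eq_iff)
qed

lemma cinner_add_right: "cinner x (y + z) = cinner x y + cinner x z"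
  unfolding cinner_def by (simp add: algebra_simps sum.distrib)
lemma cinner_diff_right: "cinner x (y - z) = cinner x y - cinner x z"
  unfolding cinner_def by (simp add: algebra_simps sum_subtractf)
lemma cinner_add_left: "cinner (x + y) z = cinner x z + cinner y z"
  unfolding cinner_def by (simp add: algebra_simps sum.distrib)
lemma cinner_diff_left: "cinner (x - y) z = cinner x z - cinner y z"
  unfolding cinner_def by (simp add: algebra_simps sum_subtractf)
lemma cinner_scale_right: "cinner x (c *s y) = c * cinner x y"
  unfolding cinner_def by (simp add: algebra_simps sum_distrib_left)
lemma cinner_scale_left: "cinner (c *s x) y = cnj c * cinner x y"
  unfolding cinner_def by (simp add: algebra_simps sum_distrib_left)
lemma cinner_zero_left[simp]: "cinner 0 y = 0" unfolding cinner_def by simp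
lemma cinner_zero_right[simp]: "cinner x 0 = 0" unfolding cinner_def by simp

lemma norm_smult_vec: "norm (c *s (x::complex^'n)) = cmod c * norm x"
  unfolding norm_vec_def by (simp add: L2_set_right_distrib norm_mult)

lemma cinner_cs: "cmod (cinner x y) \<le> norm x * norm y"
proof (cases "cinner x y = 0")
  case True then show ?thesis by simp
next
  case False
  define w where "w = cnj (cinner x y) / cmod (cinner x y)"
  have w: "cmod w = 1" using False by (simp add: w_def norm_divide)
  have e: "cnj (cinner x y) * cinner x y = of_real ((cmod (cinner x y))\<^sup>2)"
    using complex_norm_square[of "cinner x y"] by (simp add: mult.commute)
  have m0: "cmod (cinner x y) \<noteq> 0" using False by simp
  have "w * cinner x y = of_real ((cmod (cinner x y))\<^sup>2) / of_real (cmod (cinner x y))"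
    unfolding w_def e[symmetric] by simp
  also have "\<dots> = of_real (cmod (cinner x y))" using m0 by (simp add: power2_eq_square)
  finally have "w * cinner x y = of_real (cmod (cinner x y))" .
  then have "cmod (cinner x y) = Re (w * cinner x y)" by simp
  also have "\<dots> = inner x (w *s y)" by (simp add: cinner_scale_right cinner_re[symmetric])
  also have "\<dots> \<le> norm x * norm (w *s y)" by (rule norm_cauchy_schwarz)
  also have "\<dots> = norm x * norm y" by (simp add: norm_smult_vec w)
  finally show ?thesis .
qed

lemma cinner_ext: "(\<And>b. cinner b x = cinner b y) \<Longrightarrow> x = y"
proof -
  assume h: "\<And>b. cinner b x = cinner b y"
  have "cinner (x - y) (x - y) = 0" using h[of "x-y"] by (simp add: cinner_diff_right)
  then show "x = y" by (simp add: cinner_self)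
qed

lemma qform_cinner: "qform M x = cinner x (M *v x)"
  unfolding qform_def cinner_def by simp


lemma cadj_cadj[simp]: "cadj (cadj M) = M"
  unfolding cadj_def by (simp add: vec_eq_iff)

lemma cadj_mult: "cadj (M ** N) = cadj N ** cadj M"
  unfolding cadj_def matrix_matrix_mult_def by (simp add: vec_eq_iff mult.commute)

lemma herm_adj: "hermitian A \<Longrightarrow> cinner x (A *v y) = cinner (A *v x) y"
  unfolding hermitian_def by (simp add: cinner_adj)

lemma herm_qform_real: "hermitian A \<Longrightarrow> cnj (qform A x) = qform A x"
  unfolding qform_cinner by (simp add: cinner_cnj herm_adj)

definition cpen :: "complex^'n^'n \<Rightarrow> complex^'n^'n \<Rightarrow> complex^'n^'n" where
  "cpen A B = A + (\<chi> i j. \<i> * B $ i $ j)"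

lemma cpen_mv: "cpen A B *v x = A *v x + \<i> *s (B *v x)"
  unfolding cpen_def matrix_vector_mult_def
  by (simp add: vec_eq_iff algebra_simps sum.distrib sum_distrib_left)

lemma qform_cpen: "qform (cpen A B) x = qform A x + \<i> * qform B x"
  unfolding qform_cinner cpen_mv by (simp add: cinner_add_right cinner_scale_right)

lemma qform_smult: "qform M (c *s x) = cnj c * c * qform M x"
  unfolding qform_cinner by (simp add: vector_scalar_commute cinner_scale_right cinner_scale_left)

lemma norm_U:
  assumes "cadj U ** U = mat 1"
  shows "norm (U *v a) = norm a"
proof -
  have "cinner (U *v a) (U *v a) = cinner a a"
    by (simp add: cinner_adj matrix_vector_mul_assoc assms)
  then have "(norm (U *v a))\<^sup>2 = (norm a)\<^sup>2"
    using cinner_self[of "U *v a"] cinner_self[of a] of_real_eq_iff by metis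
  then show ?thesis by (simp add: power2_eq_iff_nonneg)
qed

lemma crawford_lower:
  assumes "definite_pencil A B"
  shows "crawford A B * (norm x)\<^sup>2 \<le> cmod (qform (cpen A B) x)"
proof (cases "x = 0")
  case True then show ?thesis by (simp add: qform_def)
next
  case False
  define c where "c = complex_of_real (1 / norm x)"
  have nx: "norm (c *s x) = 1" using False by (simp add: c_def norm_smult_vec norm_divide)
  have "crawford A B \<le> cmod (qform (cpen A B) (c *s x))"
    unfolding crawford_def cpen_def[symmetric]
    using nx by (intro cInf_lower) (auto intro!: bdd_belowI[where m=0])
  also have "\<dots> = cmod (qform (cpen A B) x) / (norm x)\<^sup>2"
    using False by (simp add: qform_smult c_def norm_mult power2_eq_square norm_divide)
  finally show ?thesis using False by (simp add: field_simps)
qed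

lemma pencil_bl:
  fixes A B :: "complex^'n^'m"
  shows "bounded_linear (\<lambda>(x::complex^'n, y::complex^'n). A *v x + B *v y)"
proof -
  have "linear (\<lambda>(x::complex^'n, y::complex^'n). A *v x + B *v y)"
    by (rule linearI) (auto simp: linear_cmul[OF matrix_vector_mul_linear]
          linear_add[OF matrix_vector_mul_linear] scaleR_right_distrib)
  then show ?thesis by (simp add: linear_conv_bounded_linear)
qed

lemma pencil_norm_bound:
  fixes A B :: "complex^'n^'m"
  shows "norm (A *v x + B *v y) \<le> pencil_norm A B * norm (x, y)"
  using onorm[OF pencil_bl[of A B], of "(x,y)"] unfolding pencil_norm_def by simp

lemma pencil_norm_nonneg: "pencil_norm A B \<ge> 0"
  unfolding pencil_norm_def by (rule onorm_pos_le[OF pencil_bl])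

lemma crawford_upper:
  assumes "hermitian A" "hermitian B"
  shows "cmod (qform (cpen A B) x) \<le> pencil_norm A B * (norm x)\<^sup>2"
proof (cases "qform (cpen A B) x = 0")
  case True then show ?thesis
    using pencil_norm_nonneg[of A B] by simp
next
  case False
  define a where "a = Re (qform A x)"
  define b where "b = Re (qform B x)"
  have qa: "qform A x = of_real a" using herm_qform_real[OF assms(1), of x]
    unfolding a_def by (metis Reals_cnj_iff complex_is_Real_iff of_real_Re)
  have qb: "qform B x = of_real b" using herm_qform_real[OF assms(2), of x]
    unfolding b_def by (metis Reals_cnj_iff complex_is_Real_iff of_real_Re)
  define r where "r = cmod (qform (cpen A B) x)"
  have r: "r = sqrt (a\<^sup>2 + b\<^sup>2)" unfolding r_def qform_cpen qa qb
    by (simp add: cmod_def)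
  have rpos: "r > 0" using False by (simp add: r_def)
  define c where "c = a / r"
  define s where "s = b / r"
  have r2: "r\<^sup>2 = a\<^sup>2 + b\<^sup>2" using r by simp
  have pos: "a\<^sup>2 + b\<^sup>2 > 0" using r2 rpos by (metis zero_less_power2 less_irrefl)
  have cs: "c\<^sup>2 + s\<^sup>2 = 1"
  proof -
    have "c\<^sup>2 + s\<^sup>2 = (a\<^sup>2 + b\<^sup>2) / r\<^sup>2"
      by (simp add: c_def s_def power_divide add_divide_distrib)
    also have "\<dots> = 1" using pos by (simp only: r2) (rule divide_self, linarith)
    finally show ?thesis .
  qed
  have "c * a + s * b = (a\<^sup>2 + b\<^sup>2) / r"
    by (simp add: c_def s_def power2_eq_square add_divide_distrib)
  moreover have "(a\<^sup>2 + b\<^sup>2) / r = r" using rpos by (simp only: r2[symmetric]) (simp add: power2_eq_square)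
  ultimately have "r = c * a + s * b" by simp
  also have "\<dots> = Re (cinner x (A *v (of_real c *s x) + B *v (of_real s *s x)))"
    by (simp add: vector_scalar_commute cinner_add_right cinner_scale_right
        qform_cinner[symmetric] qa qb)
  also have "\<dots> \<le> norm x * norm (A *v (of_real c *s x) + B *v (of_real s *s x))"
    unfolding cinner_re by (rule norm_cauchy_schwarz)
  also have "\<dots> \<le> norm x * (pencil_norm A B * norm (of_real c *s x, of_real s *s x))"
    by (rule mult_left_mono[OF pencil_norm_bound]) simp
  also have "norm (of_real c *s x, of_real s *s x) = norm x"
    using cs by (simp add: norm_Pair norm_smult_vec power_mult_distrib
        distrib_right[symmetric])
  finally show ?thesis by (simp add: r_def power2_eq_square mult_ac)
qed


lemma cinner_U: "cinner (U *v b) w = cinner b (cadj U *v w)"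
  by (rule cinner_adj)

lemma range_subspace: "vec.subspace (range (\<lambda>b. (M::complex^'k^'n) *v b))"
  unfolding vec.subspace_def
proof (intro conjI ballI allI)
  show "0 \<in> range ((*v) M)" by (metis matrix_vector_mult_0_right rangeI)
next
  fix x y assume "x \<in> range ((*v) M)" "y \<in> range ((*v) M)"
  then obtain a b where "x = M *v a" "y = M *v b" by blast
  then have "x + y = M *v (a + b)" by (simp add: matrix_vector_right_distrib)
  then show "x + y \<in> range ((*v) M)" by blast
next
  fix c :: complex and x assume "x \<in> range ((*v) M)"
  then obtain a where "x = M *v a" by blast
  then have "c *s x = M *v (c *s a)" by (simp add: vector_scalar_commute)
  then show "c *s x \<in> range ((*v) M)" by blast
qed

lemma dim_range_inj:
  fixes M :: "complex^'k^'n"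
  assumes "inj ((*v) M)"
  shows "vec.dim (range ((*v) M)) = vec.dim (UNIV :: (complex^'k) set)"
  by (rule vec.dim_image_eq[OF matrix_vector_mul_linear_gen]) (use assms in \<open>auto simp: inj_on_def inj_def\<close>)

lemma decomp:
  fixes A B :: "complex^'n^'n" and U :: "complex^'k^'n"
  assumes def: "definite_pencil A B"
    and UU: "cadj U ** U = mat 1"
    and defl: "right_deflating A B (range (\<lambda>y. U *v y))"
  shows "\<exists>K :: complex^'k^'n. (\<forall>b. A *v (U *v b) = K *v ((cadj U ** A ** U) *v b))
     \<and> (\<forall>b. B *v (U *v b) = K *v ((cadj U ** B ** U) *v b)) \<and> cadj U ** K = mat 1"
proof -
  define C where "C = cpen A B"
  define M where "M = cadj U ** C ** U"
  have gpos: "crawford A B > 0" using def by (simp add: definite_pencil_def)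
  have Minj: "\<forall>b. M *v b = 0 \<longrightarrow> b = 0"
  proof (intro allI impI)
    fix b assume "M *v b = 0"
    then have "cinner b (M *v b) = 0" by simp
    moreover have "cinner b (M *v b) = qform C (U *v b)"
      unfolding M_def qform_cinner
      by (simp add: cinner_U matrix_vector_mul_assoc[symmetric])
    ultimately have "crawford A B * (norm (U *v b))\<^sup>2 \<le> 0"
      using crawford_lower[OF def, of "U *v b"] by (simp add: C_def)
    then have "norm (U *v b) = 0" using gpos
      by (simp add: mult_le_0_iff)
    then show "b = 0" using norm_U[OF UU, of b] by simp
  qed
  obtain Mi where MiM: "Mi ** M = mat 1"
    using Minj matrix_left_invertible_ker by blast
  then have MMi: "M ** Mi = mat 1" using matrix_left_right_inverse by blast
  define K where "K = (C ** U) ** Mi"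
  have K1: "cadj U ** K = mat 1"
    unfolding K_def using MMi by (simp add: M_def matrix_mul_assoc)
  define X where "X = range (\<lambda>y. U *v y)"
  define Y where "Y = {A *v x + B *v y | x y. x \<in> X \<and> y \<in> X}"
  define Z where "Z = range (\<lambda>y. (C ** U) *v y)"
  have ZY: "Z \<subseteq> Y"
  proof
    fix z assume "z \<in> Z"
    then obtain b where b: "z = (C ** U) *v b" by (auto simp: Z_def)
    have "z = A *v (U *v b) + B *v (U *v (\<i> *s b))"
      by (simp add: b C_def matrix_vector_mul_assoc[symmetric] cpen_mv vector_scalar_commute)
    then show "z \<in> Y" unfolding Y_def X_def by blast
  qed
  have injU: "inj ((*v) U)"
    unfolding inj_def by (metis UU matrix_vector_mul_assoc matrix_vector_mul_lid)
  have injCU: "inj ((*v) (C ** U))"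
    unfolding inj_def
  proof (intro allI impI)
    fix x y assume "(C ** U) *v x = (C ** U) *v y"
    then have "M *v x = M *v y" unfolding M_def
      by (metis matrix_mul_assoc matrix_vector_mul_assoc)
    then show "x = y" by (metis MiM matrix_vector_mul_assoc matrix_vector_mul_lid)
  qed
  have "vec.dim Y \<le> vec.dim X" using defl unfolding right_deflating_def X_def Y_def by blast
  also have "\<dots> = vec.dim Z" unfolding X_def Z_def
    using dim_range_inj[OF injU] dim_range_inj[OF injCU] by simp
  finally have "vec.span Z = vec.span Y" using ZY vec.dim_eq_span by blast
  moreover have "vec.span Z = Z"
    using range_subspace[of "C ** U"] unfolding Z_def by (simp only: vec.span_eq_iff)
  ultimately have YZ: "Y \<subseteq> Z"
    using vec.span_superset[of Y] by simp
  have key: "P *v (U *v b) = K *v ((cadj U ** P ** U) *v b)"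
    if hY: "\<And>b. P *v (U *v b) \<in> Y" for P b
  proof -
    obtain c where c: "P *v (U *v b) = (C ** U) *v c" using YZ hY[of b] unfolding Z_def by blast
    then have "cadj U *v (P *v (U *v b)) = M *v c" unfolding M_def
      by (metis matrix_mul_assoc matrix_vector_mul_assoc)
    then have "(cadj U ** P ** U) *v b = M *v c"
      by (simp add: matrix_vector_mul_assoc matrix_mul_assoc)
    then have "c = Mi *v ((cadj U ** P ** U) *v b)"
      by (simp add: MiM matrix_vector_mul_assoc)
    then show ?thesis using c by (simp add: K_def matrix_vector_mul_assoc matrix_mul_assoc)
  qed
  have "A *v (U *v b) \<in> Y" for b
  proof -
    have "A *v (U *v b) = A *v (U *v b) + B *v (U *v 0)" by simp
    then show ?thesis unfolding Y_def X_def by blast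
  qed
  moreover have "B *v (U *v b) \<in> Y" for b
  proof -
    have "B *v (U *v b) = A *v (U *v 0) + B *v (U *v b)" by simp
    then show ?thesis unfolding Y_def X_def by blast
  qed
  ultimately show ?thesis using K1 key by blast
qed


lemma parallelogram: "(norm (x + w))\<^sup>2 + (norm (x - w))\<^sup>2 = 2 * (norm (x::complex^'n))\<^sup>2 + 2 * (norm w)\<^sup>2"
  by (simp add: power2_norm_eq_inner inner_add_left inner_add_right inner_diff_left
      inner_diff_right inner_commute)

lemma cadj_mat1[simp]: "cadj (mat 1 :: complex^'n^'n) = mat 1"
  unfolding cadj_def mat_def by (simp add: vec_eq_iff)

lemma herm_compress:
  assumes "hermitian A" shows "hermitian (cadj U ** A ** U)"
  using assms unfolding hermitian_def by (simp add: cadj_mult matrix_mul_assoc)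

lemma mv_bound: "norm ((M::complex^'n^'m) *v x) \<le> specnorm M * norm x"
proof -
  have "bounded_linear ((*v) M)"
    using matrix_vector_mul_linear[of M] by (simp add: linear_conv_bounded_linear)
  then show ?thesis unfolding specnorm_def by (rule onorm)
qed

lemma specnorm_nonneg: "specnorm (M::complex^'n^'m) \<ge> 0"
proof -
  have "bounded_linear ((*v) M)"
    using matrix_vector_mul_linear[of M] by (simp add: linear_conv_bounded_linear)
  then show ?thesis unfolding specnorm_def by (rule onorm_pos_le)
qed

lemma Kadj_bound:
  fixes A B :: "complex^'n^'n" and U :: "complex^'k^'n" and K :: "complex^'k^'n"
  assumes def: "definite_pencil A B"
    and UU: "cadj U ** U = mat 1"
    and KA: "\<forall>b. A *v (U *v b) = K *v ((cadj U ** A ** U) *v b)"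
    and KB: "\<forall>b. B *v (U *v b) = K *v ((cadj U ** B ** U) *v b)"
    and K1: "cadj U ** K = mat 1"
  shows "crawford A B * (norm (cadj K *v y))\<^sup>2 \<le> pencil_norm A B * (norm y)\<^sup>2"
proof -
  have hA: "hermitian A" and hB: "hermitian B" using def by (auto simp: definite_pencil_def)
  define a where "a = cadj K *v y"
  define x1 where "x1 = U *v a"
  define w where "w = y - x1"
  have proj: "cadj U *v (P *v y) = (cadj U ** P ** U) *v a"
    if hP: "hermitian P" and KP: "\<forall>b. P *v (U *v b) = K *v ((cadj U ** P ** U) *v b)" for P
  proof (rule cinner_ext)
    fix b
    have "cinner b (cadj U *v (P *v y)) = cinner (U *v b) (P *v y)" by (simp add: cinner_U)
    also have "\<dots> = cinner (P *v (U *v b)) y" by (simp add: herm_adj[OF hP])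
    also have "\<dots> = cinner ((cadj U ** P ** U) *v b) a" using KP by (simp add: cinner_adj a_def)
    also have "\<dots> = cinner b ((cadj U ** P ** U) *v a)"
      by (simp add: herm_adj[OF herm_compress[OF hP]])
    finally show "cinner b (cadj U *v (P *v y)) = cinner b ((cadj U ** P ** U) *v a)" .
  qed
  have zero: "cadj U *v (P *v w) = 0"
    if hP: "hermitian P" and KP: "\<forall>b. P *v (U *v b) = K *v ((cadj U ** P ** U) *v b)" for P
    using proj[OF hP KP] unfolding w_def x1_def
    by (simp add: matrix_vector_mult_diff_distrib matrix_vector_mul_assoc matrix_mul_assoc)
  have zA: "cadj U *v (A *v w) = 0" by (rule zero[OF hA KA])
  have zB: "cadj U *v (B *v w) = 0" by (rule zero[OF hB KB])
  define C where "C = cpen A B"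
  have s1: "cinner x1 (C *v w) = 0"
    unfolding x1_def C_def cpen_mv
    by (simp add: cinner_U cinner_add_right cinner_scale_right zA zB vector_scalar_commute
        matrix_vector_right_distrib)
  have s2: "cinner w (C *v x1) = 0"
  proof -
    have "cinner w (C *v x1) = cinner (A *v w) x1 + \<i> * cinner (B *v w) x1"
      unfolding C_def cpen_mv
      by (simp add: cinner_add_right cinner_scale_right herm_adj[OF hA] herm_adj[OF hB])
    also have "\<dots> = 0"
    proof -
      have "cinner (P *v w) (U *v a) = cnj (cinner a (cadj U *v (P *v w)))" for P
        by (metis cinner_U cinner_cnj)
      then show ?thesis using zA zB unfolding x1_def by simp
    qed
    finally show ?thesis .
  qed
  define Q where "Q = qform C x1 + qform C w"
  have qp: "qform C (x1 + w) = Q"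
    unfolding Q_def qform_cinner
    by (simp add: matrix_vector_right_distrib cinner_add_left cinner_add_right s1 s2)
  have qm: "qform C (x1 - w) = Q"
    unfolding Q_def qform_cinner
    by (simp add: matrix_vector_mult_diff_distrib cinner_diff_left cinner_diff_right s1 s2)
  have y: "y = x1 + w" by (simp add: w_def)
  have l1: "crawford A B * (norm (x1 + w))\<^sup>2 \<le> cmod Q"
    using crawford_lower[OF def, of "x1 + w"] qp by (simp add: C_def)
  have l2: "crawford A B * (norm (x1 - w))\<^sup>2 \<le> cmod Q"
    using crawford_lower[OF def, of "x1 - w"] qm by (simp add: C_def)
  have "crawford A B * ((norm (x1 + w))\<^sup>2 + (norm (x1 - w))\<^sup>2) \<le> 2 * cmod Q"
    using l1 l2 unfolding distrib_left by linarith
  then have "crawford A B * (2 * (norm x1)\<^sup>2 + 2 * (norm w)\<^sup>2) \<le> 2 * cmod Q"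
    by (simp only: parallelogram)
  moreover have "crawford A B > 0" using def by (simp add: definite_pencil_def)
  ultimately have "crawford A B * (norm x1)\<^sup>2 \<le> cmod Q"
    by (smt (verit, ccfv_SIG) mult_nonneg_nonneg zero_le_power2 distrib_left)
  also have "\<dots> \<le> pencil_norm A B * (norm y)\<^sup>2"
    using crawford_upper[OF hA hB, of y] qp y by (simp add: C_def)
  finally show ?thesis by (simp add: x1_def norm_U[OF UU] a_def)
qed


lemma final_bounds:
  fixes A B :: "complex^'n^'n" and U :: "complex^'k^'n" and K :: "complex^'k^'n"
  assumes def: "definite_pencil A B"
    and UU: "cadj U ** U = mat 1"
    and KA: "\<forall>b. A *v (U *v b) = K *v ((cadj U ** A ** U) *v b)"
    and KB: "\<forall>b. B *v (U *v b) = K *v ((cadj U ** B ** U) *v b)"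
    and K1: "cadj U ** K = mat 1"
  shows "specnorm (K ** E ** cadj K) \<le> pencil_norm A B / crawford A B * specnorm E"
proof -
  define c where "c = pencil_norm A B / crawford A B"
  have gpos: "crawford A B > 0" using def by (simp add: definite_pencil_def)
  have c0: "c \<ge> 0" using gpos pencil_norm_nonneg[of A B] by (simp add: c_def)
  have b1: "norm (cadj K *v y) \<le> sqrt c * norm y" for y
  proof -
    have "(norm (cadj K *v y))\<^sup>2 \<le> c * (norm y)\<^sup>2"
      using Kadj_bound[OF def UU KA KB K1, of y] gpos by (simp add: c_def field_simps)
    then have "sqrt ((norm (cadj K *v y))\<^sup>2) \<le> sqrt (c * (norm y)\<^sup>2)"
      using real_sqrt_le_mono by blast
    then show ?thesis by (simp add: real_sqrt_mult)
  qed
  have b2: "norm (K *v w) \<le> sqrt c * norm w" for w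
  proof (cases "K *v w = 0")
    case True then show ?thesis using c0 by simp
  next
    case False
    have "(norm (K *v w))\<^sup>2 = Re (cinner (K *v w) (K *v w))" by (simp add: cinner_self)
    also have "\<dots> = Re (cinner w (cadj K *v (K *v w)))" by (simp add: cinner_adj)
    also have "\<dots> \<le> norm w * norm (cadj K *v (K *v w))"
      unfolding cinner_re by (rule norm_cauchy_schwarz)
    also have "\<dots> \<le> norm w * (sqrt c * norm (K *v w))"
      by (rule mult_left_mono[OF b1]) simp
    finally have "norm (K *v w) * norm (K *v w) \<le> (sqrt c * norm w) * norm (K *v w)"
      by (simp add: power2_eq_square mult_ac)
    then show ?thesis using False by simp
  qed
  have "norm ((K ** E ** cadj K) *v x) \<le> c * specnorm E * norm x" for x
  proof -
    have "norm ((K ** E ** cadj K) *v x) = norm (K *v (E *v (cadj K *v x)))"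
      by (simp add: matrix_vector_mul_assoc matrix_mul_assoc)
    also have "\<dots> \<le> sqrt c * norm (E *v (cadj K *v x))" by (rule b2)
    also have "\<dots> \<le> sqrt c * (specnorm E * norm (cadj K *v x))"
      by (rule mult_left_mono[OF mv_bound]) (simp add: c0)
    also have "\<dots> \<le> sqrt c * (specnorm E * (sqrt c * norm x))"
      by (intro mult_left_mono b1 specnorm_nonneg) (simp_all add: c0)
    also have "\<dots> = (sqrt c * sqrt c) * specnorm E * norm x" by (simp only: mult_ac)
    also have "\<dots> = c * specnorm E * norm x" using c0 by simp
    finally show ?thesis .
  qed
  then show ?thesis unfolding c_def[symmetric] specnorm_def[of "K ** E ** cadj K"]
    by (intro onorm_le) (simp add: specnorm_def)
qed

theorem lemma4p1:
  fixes A B :: "complex^'n^'n" and U :: "complex^'k^'n" and \<epsilon> \<epsilon>' :: real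
  assumes "definite_pencil A B"
    and "cadj U ** U = mat 1"
    and "right_deflating A B (range (\<lambda>y. U *v y))"
    and "\<epsilon> > 0"
    and "0 < \<epsilon>'"
    and "\<epsilon>' \<le> \<epsilon> * inverse (1 + pencil_norm A B / crawford A B)"
  shows "sym_pseudospec \<epsilon>' (cadj U ** A ** U) (cadj U ** B ** U) \<subseteq> sym_pseudospec \<epsilon> A B"
proof
  fix z assume "z \<in> sym_pseudospec \<epsilon>' (cadj U ** A ** U) (cadj U ** B ** U)"
  then obtain u E F where u: "u \<noteq> 0" and hE: "hermitian E" and hF: "hermitian F"
    and nEF: "sqrt ((specnorm E)\<^sup>2 + (specnorm F)\<^sup>2) \<le> \<epsilon>'"
    and eq: "(cadj U ** A ** U + E) *v u = z *s ((cadj U ** B ** U + F) *v u)"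
    unfolding sym_pseudospec_def by blast
  obtain K :: "complex^'k^'n" where KA: "\<forall>b. A *v (U *v b) = K *v ((cadj U ** A ** U) *v b)"
    and KB: "\<forall>b. B *v (U *v b) = K *v ((cadj U ** B ** U) *v b)" and K1: "cadj U ** K = mat 1"
    using decomp[OF assms(1-3)] by blast
  define c where "c = pencil_norm A B / crawford A B"
  have gpos: "crawford A B > 0" using assms(1) by (simp add: definite_pencil_def)
  have c0: "c \<ge> 0" using gpos pencil_norm_nonneg[of A B] by (simp add: c_def)
  have K1': "cadj K ** U = mat 1" using arg_cong[OF K1, of cadj] by (simp add: cadj_mult)
  define E' where "E' = K ** E ** cadj K"
  define F' where "F' = K ** F ** cadj K"
  have hE': "hermitian E'" using hE unfolding E'_def hermitian_def
    by (simp add: cadj_mult matrix_mul_assoc)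
  have hF': "hermitian F'" using hF unfolding F'_def hermitian_def
    by (simp add: cadj_mult matrix_mul_assoc)
  have v0: "U *v u \<noteq> 0" using u norm_U[OF assms(2), of u] by auto
  have act: "(P + K ** G ** cadj K) *v (U *v u) = K *v ((cadj U ** P ** U + G) *v u)"
    if "\<forall>b. P *v (U *v b) = K *v ((cadj U ** P ** U) *v b)" for P G
  proof -
    have "cadj K *v (U *v u) = u" by (simp add: matrix_vector_mul_assoc K1')
    then have "(K ** G ** cadj K) *v (U *v u) = K *v (G *v u)"
      by (metis matrix_mul_assoc matrix_vector_mul_assoc)
    then show ?thesis using that
      by (simp add: matrix_vector_mult_add_rdistrib matrix_vector_right_distrib)
  qed
  have eq': "(A + E') *v (U *v u) = z *s ((B + F') *v (U *v u))"
    unfolding E'_def F'_def act[OF KA] act[OF KB] eq by (simp add: vector_scalar_commute)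
  have sE: "specnorm E' \<le> c * specnorm E"
    unfolding E'_def c_def by (rule final_bounds[OF assms(1,2) KA KB K1])
  have sF: "specnorm F' \<le> c * specnorm F"
    unfolding F'_def c_def by (rule final_bounds[OF assms(1,2) KA KB K1])
  have "sqrt ((specnorm E')\<^sup>2 + (specnorm F')\<^sup>2) \<le> sqrt ((c * specnorm E)\<^sup>2 + (c * specnorm F)\<^sup>2)"
    by (intro real_sqrt_le_mono add_mono power_mono sE sF specnorm_nonneg)
  also have "\<dots> = c * sqrt ((specnorm E)\<^sup>2 + (specnorm F)\<^sup>2)"
    using c0 by (simp add: power_mult_distrib distrib_left[symmetric] real_sqrt_mult)
  also have "\<dots> \<le> c * \<epsilon>'" by (rule mult_left_mono[OF nEF c0])
  also have "\<dots> \<le> \<epsilon>"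
  proof -
    have "\<epsilon>' * (1 + c) \<le> \<epsilon>" using assms(6) c0 unfolding c_def[symmetric]
      by (simp add: field_simps)
    then show ?thesis using assms(5) by (simp add: algebra_simps)
  qed
  finally have "sqrt ((specnorm E')\<^sup>2 + (specnorm F')\<^sup>2) \<le> \<epsilon>" .
  then show "z \<in> sym_pseudospec \<epsilon> A B"
    unfolding sym_pseudospec_def using v0 hE' hF' eq' by blast
qed

end
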